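(* Let $T\in S(\lambda,\mu)$ and let $\tau$ be a row-standard filling of shape $\lambda$ and content $\mu$ with $\mathrm{st}(\tau)=T$. Then $\tau$ can be obtained from $T$ by a finite sequence of admissible transpositions, and the minimum number of admissible transpositions in such a sequence is $\mathrm{inv}(\tau)$.
   Context: A shape is a partition $\lambda=(\lambda_1\ge\dots\ge\lambda_m\ge1)$ with $\lambda_i$ left-justified boxes in row $i$ (rows top to bottom, columns left to right). A content is $\mu=(\mu_1,\dots,\mu_M)$, all $\mu_i\ge1$, $\sum\mu_i=\sum\lambda_i$; a filling of content $\mu$ uses value $v$ exactly $\mu_v$ times; row-standard means rows strictly increase left to right. $S(\lambda,\mu)$: row-standard fillings with weakly increasing columns. Inversion pairs of a row-standard $\tau$: for a box $c$ and $r\ge1$ let $c^{(r)}$ be the box $r$ positions to its right, if it exists. For distinct boxes $c,c'$ in the same column with $\tau(c)<\tau(c')$, let $r\ge1$ be least such that one of $c^{(r)},c'^{(r)}$ does not exist or both exist with $\tau(c^{(r)})\ne\tau(c'^{(r)})$. $(c,c')$ is an inversion pair if either (one does not exist and $c$ lies below $c'$) or (both exist and $\tau(c^{(r)})>\tau(c'^{(r)})$); $\mathrm{inv}(\tau)$ is the number of inversion pairs. $\mathrm{st}(\tau)$: sort each column weakly increasingly. Height order: on the boxes of each column of a row-standard $\tau$ a total order $\blacktriangleleft$ is defined, column by column from right to left: for distinct boxes $c,c'$ in column $j$, if at least one of them has no box directly to its right then $c\blacktriangleleft c'$ iff $c$ is above $c'$; if both have right neighbours $b,b'$, then $c\blacktriangleleft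 c'$ iff $\tau(b)<\tau(b')$, or $\tau(b)=\tau(b')$ and $b\blacktriangleleft b'$ (in column $j+1$). The height of a box is its rank in this order within its column. A partial row transposition at two boxes $c,c'$ of column $j$ (in rows $i_1,i_2$) with $\tau(c)<\tau(c')$ and heights differing by exactly $1$ swaps the contents of rows $i_1$ and $i_2$ in columns $1,\dots,j$ (columns $>j$ unchanged); it is admissible if $\tau(c)$ and $\tau(c')$ are both smaller than the entries directly to the right of $c$ and of $c'$ (whenever these exist), i.e. the result is again row-standard. *)

theory Defs
  imports Main
begin

text \<open>Rows and columns are 0-indexed. A filling is a function row => column => value,
  required to be 0 outside the shape. Box (i,j) exists iff i < length lam and j < lam!i.\<close>

type_synonym filling = "nat \<Rightarrow> nat \<Rightarrow> nat"

definition box :: "nat list \<Rightarrow> nat \<Rightarrow> nat \<Rightarrow> bool" where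
  "box lam i j \<longleftrightarrow> i < length lam \<and> j < lam ! i"

definition is_shape :: "nat list \<Rightarrow> bool" where
  "is_shape lam \<longleftrightarrow> sorted_wrt (\<ge>) lam \<and> (\<forall>x\<in>set lam. 1 \<le> x)"

definition is_content :: "nat list \<Rightarrow> nat list \<Rightarrow> bool" where
  "is_content lam mu \<longleftrightarrow> (\<forall>x\<in>set mu. 1 \<le> x) \<and> sum_list mu = sum_list lam"

definition is_filling :: "nat list \<Rightarrow> nat list \<Rightarrow> filling \<Rightarrow> bool" where
  "is_filling lam mu \<tau> \<longleftrightarrow>
     (\<forall>i j. \<not> box lam i j \<longrightarrow> \<tau> i j = 0) \<and>
     (\<forall>i j. box lam i j \<longrightarrow> 1 \<le> \<tau> i j \<and> \<tau> i j \<le> length mu) \<and>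
     (\<forall>v\<in>{1..length mu}. card {(i, j). box lam i j \<and> \<tau> i j = v} = mu ! (v - 1))"

definition row_standard :: "nat list \<Rightarrow> filling \<Rightarrow> bool" where
  "row_standard lam \<tau> \<longleftrightarrow> (\<forall>i j. box lam i (Suc j) \<longrightarrow> \<tau> i j < \<tau> i (Suc j))"

definition col_weak :: "nat list \<Rightarrow> filling \<Rightarrow> bool" where
  "col_weak lam \<tau> \<longleftrightarrow> (\<forall>i j. box lam (Suc i) j \<longrightarrow> \<tau> i j \<le> \<tau> (Suc i) j)"

definition S_set :: "nat list \<Rightarrow> nat list \<Rightarrow> filling set" where
  "S_set lam mu = {T. is_filling lam mu T \<and> row_standard lam T \<and> col_weak lam T}"

definition st :: "nat list \<Rightarrow> filling \<Rightarrow> filling" where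
  "st lam \<tau> = (\<lambda>i j. if box lam i j
      then sort (map (\<lambda>k. \<tau> k j) (filter (\<lambda>k. j < lam ! k) [0..<length lam])) ! i
      else 0)"

definition inv_stop :: "nat list \<Rightarrow> filling \<Rightarrow> nat \<Rightarrow> nat \<Rightarrow> nat \<Rightarrow> nat \<Rightarrow> bool" where
  "inv_stop lam \<tau> i i' j r \<longleftrightarrow>
     \<not> box lam i (j + r) \<or> \<not> box lam i' (j + r) \<or> \<tau> i (j + r) \<noteq> \<tau> i' (j + r)"

definition inv_pair :: "nat list \<Rightarrow> filling \<Rightarrow> nat \<Rightarrow> nat \<Rightarrow> nat \<Rightarrow> bool" where
  "inv_pair lam \<tau> i i' j \<longleftrightarrow>
     box lam i j \<and> box lam i' j \<and> i \<noteq> i' \<and> \<tau> i j < \<tau> i' j \<and>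
     (let r = (LEAST r. 1 \<le> r \<and> inv_stop lam \<tau> i i' j r) in
        (if box lam i (j + r) \<and> box lam i' (j + r)
         then \<tau> i (j + r) > \<tau> i' (j + r)
         else i' < i))"

definition inv_count :: "nat list \<Rightarrow> filling \<Rightarrow> nat" where
  "inv_count lam \<tau> = card {(i, i', j). inv_pair lam \<tau> i i' j}"

text \<open>Height order: hless lam tau j i i' means (i,j) is strictly before (i',j).\<close>
function hless :: "nat list \<Rightarrow> filling \<Rightarrow> nat \<Rightarrow> nat \<Rightarrow> nat \<Rightarrow> bool" where
  "hless lam \<tau> j i i' =
     (if \<not> (box lam i (Suc j) \<and> box lam i' (Suc j)) then i < i'
      else \<tau> i (Suc j) < \<tau> i' (Suc j) \<or>
           (\<tau> i (Suc j) = \<tau> i' (Suc j) \<and> hless lam \<tau> (Suc j) i i'))"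
  by pat_completeness auto
termination
proof (relation "measure (\<lambda>(lam, \<tau>, j, i, i'). Suc (sum_list lam) - j)")
  show "wf (measure (\<lambda>(lam, \<tau>, j, i, i'). Suc (sum_list lam) - j))" by simp
next
  fix lam :: "nat list" and \<tau> :: filling and j i i'
  assume "\<not> \<not> (box lam i (Suc j) \<and> box lam i' (Suc j))"
  then have "Suc j < lam ! i" "i < length lam" by (auto simp: box_def)
  moreover have "lam ! i \<le> sum_list lam"
    using \<open>i < length lam\<close> by (simp add: member_le_sum_list)
  ultimately show "((lam, \<tau>, Suc j, i, i'), lam, \<tau>, j, i, i')
       \<in> measure (\<lambda>(lam, \<tau>, j, i, i'). Suc (sum_list lam) - j)" by simp
qed

definition height :: "nat list \<Rightarrow> filling \<Rightarrow> nat \<Rightarrow> nat \<Rightarrow> nat" where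
  "height lam \<tau> i j = card {i'. box lam i' j \<and> i' \<noteq> i \<and> hless lam \<tau> j i' i}"

definition swap_rows :: "filling \<Rightarrow> nat \<Rightarrow> nat \<Rightarrow> nat \<Rightarrow> filling" where
  "swap_rows \<tau> i1 i2 j = (\<lambda>i k.
     if k \<le> j \<and> i = i1 then \<tau> i2 k
     else if k \<le> j \<and> i = i2 then \<tau> i1 k
     else \<tau> i k)"

definition adm_step :: "nat list \<Rightarrow> filling \<Rightarrow> filling \<Rightarrow> bool" where
  "adm_step lam \<tau> \<tau>' \<longleftrightarrow> (\<exists>i1 i2 j.
     box lam i1 j \<and> box lam i2 j \<and> i1 \<noteq> i2 \<and> \<tau> i1 j < \<tau> i2 j \<and>
     \<bar>int (height lam \<tau> i1 j) - int (height lam \<tau> i2 j)\<bar> = 1 \<and>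
     (box lam i1 (Suc j) \<longrightarrow> \<tau> i1 j < \<tau> i1 (Suc j) \<and> \<tau> i2 j < \<tau> i1 (Suc j)) \<and>
     (box lam i2 (Suc j) \<longrightarrow> \<tau> i1 j < \<tau> i2 (Suc j) \<and> \<tau> i2 j < \<tau> i2 (Suc j)) \<and>
     \<tau>' = swap_rows \<tau> i1 i2 j)"

end

theory Submission imports Defs "HOL-Library.Multiset" begin

lemma shape_mono:
  assumes "is_shape lam" "i \<le> i'" "box lam i' j" shows "box lam i j"
proof (cases "i = i'")
  case False
  with assms(2) have "i < i'" by simp
  moreover have "i' < length lam" using assms(3) by (simp add: box_def)
  ultimately have "lam ! i \<ge> lam ! i'"
    using assms(1) sorted_wrt_nth_less unfolding is_shape_def by fastforce
  then show ?thesis using assms(3) \<open>i < i'\<close> by (auto simp: box_def)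
qed (use assms in auto)

lemma box_lt:
  assumes "is_shape lam" "box lam u j" "\<not> box lam w j" shows "u < w"
  using shape_mono[OF assms(1), of w u j] assms by (cases "u < w") auto

lemma hless_unf:
  "hless lam \<tau> j i i' =
     (if \<not> (box lam i (Suc j) \<and> box lam i' (Suc j)) then i < i'
      else \<tau> i (Suc j) < \<tau> i' (Suc j) \<or>
           (\<tau> i (Suc j) = \<tau> i' (Suc j) \<and> hless lam \<tau> (Suc j) i i'))"
  by (rule hless.simps)

declare hless.simps[simp del]


lemma hless_asym: "hless lam \<tau> j x y \<Longrightarrow> \<not> hless lam \<tau> j y x"
proof (induction lam \<tau> j x y rule: hless.induct)
  case (1 lam \<tau> j i i')
  then show ?case
    by (subst (asm) hless_unf, subst hless_unf) (auto split: if_splits)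
qed

lemma hless_irrefl: "\<not> hless lam \<tau> j i i"
  using hless_asym by blast

lemma hless_total: "x \<noteq> y \<Longrightarrow> hless lam \<tau> j x y \<or> hless lam \<tau> j y x"
proof (induction lam \<tau> j x y rule: hless.induct)
  case (1 lam \<tau> j i i')
  then show ?case
    by (subst hless_unf, subst hless_unf) (auto split: if_splits)
qed

lemma hless_trans:
  shows "is_shape lam \<Longrightarrow> hless lam \<tau> j x y \<Longrightarrow> hless lam \<tau> j y z \<Longrightarrow> hless lam \<tau> j x z"
proof (induction lam \<tau> j x y arbitrary: z rule: hless.induct)
  case (1 lam \<tau> j x y)
  show ?case
  proof (cases "box lam x (Suc j) \<and> box lam y (Suc j)")
    case True
    then have xy: "\<tau> x (Suc j) < \<tau> y (Suc j) \<or> (\<tau> x (Suc j) = \<tau> y (Suc j) \<and> hless lam \<tau> (Suc j) x y)"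
      using "1.prems"(2) by (subst (asm) hless_unf) auto
    show ?thesis
    proof (cases "box lam z (Suc j)")
      case True
      then have yz: "\<tau> y (Suc j) < \<tau> z (Suc j) \<or> (\<tau> y (Suc j) = \<tau> z (Suc j) \<and> hless lam \<tau> (Suc j) y z)"
        using "1.prems"(3) \<open>box lam x (Suc j) \<and> box lam y (Suc j)\<close> by (subst (asm) hless_unf) auto
      show ?thesis using xy yz True \<open>box lam x (Suc j) \<and> box lam y (Suc j)\<close> "1.IH" "1.prems"(1)
        by (subst hless_unf) auto
    next
      case False
      have "y < z" using "1.prems"(3) False by (subst (asm) hless_unf) auto
      have "x < z" using False box_lt[OF "1.prems"(1), of x "Suc j" z] \<open>box lam x (Suc j) \<and> box lam y (Suc j)\<close>
        by blast
      then show ?thesis using False by (subst hless_unf) simp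
    qed
  next
    case False
    then have "x < y" using "1.prems"(2) by (subst (asm) hless_unf) auto
    show ?thesis
    proof (cases "box lam y (Suc j) \<and> box lam z (Suc j)")
      case True
      then have "\<not> box lam x (Suc j)" using False by auto
      then have "y < x" using box_lt[OF "1.prems"(1), of y "Suc j" x] True by auto
      then show ?thesis using \<open>x < y\<close> by simp
    next
      case F2: False
      then have "y < z" using "1.prems"(3) by (subst (asm) hless_unf) auto
      show ?thesis
      proof (cases "box lam x (Suc j) \<and> box lam z (Suc j)")
        case True
        then have "\<not> box lam y (Suc j)" using False by auto
        then have "z < y" using box_lt[OF "1.prems"(1), of z "Suc j" y] True by auto
        then show ?thesis using \<open>y < z\<close> by simp
      next
        case False
        then show ?thesis using \<open>x < y\<close> \<open>y < z\<close> by (subst hless_unf) auto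
      qed
    qed
  qed
qed

lemma hless_stop:
  "1 \<le> r \<Longrightarrow> inv_stop lam \<tau> y x j r \<Longrightarrow> (\<forall>r'. 1 \<le> r' \<longrightarrow> r' < r \<longrightarrow> \<not> inv_stop lam \<tau> y x j r') \<Longrightarrow>
   hless lam \<tau> j x y = (if box lam y (j+r) \<and> box lam x (j+r) then \<tau> x (j+r) < \<tau> y (j+r) else x < y)"
proof (induction lam \<tau> j x y arbitrary: r rule: hless.induct)
  case (1 lam \<tau> j x y)
  show ?case
  proof (cases "box lam x (Suc j) \<and> box lam y (Suc j) \<and> \<tau> x (Suc j) = \<tau> y (Suc j)")
    case False
    then have "inv_stop lam \<tau> y x j 1" by (auto simp: inv_stop_def)
    then have "r = 1" using "1.prems"(1,3) by (metis le_neq_implies_less order_refl)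
    then show ?thesis using False by (subst hless_unf) auto
  next
    case True
    then have "\<not> inv_stop lam \<tau> y x j 1" by (auto simp: inv_stop_def)
    then have "r \<noteq> 1" using "1.prems" by auto
    then obtain r2 where r2: "r = Suc r2" "1 \<le> r2" using "1.prems"(1) by (cases r) auto
    have st: "\<And>q. inv_stop lam \<tau> y x j (Suc q) = inv_stop lam \<tau> y x (Suc j) q"
      by (simp add: inv_stop_def)
    have "hless lam \<tau> (Suc j) x y = (if box lam y (Suc j+r2) \<and> box lam x (Suc j+r2) then \<tau> x (Suc j+r2) < \<tau> y (Suc j+r2) else x < y)"
    proof (rule "1.IH")
      show "\<not> \<not> (box lam x (Suc j) \<and> box lam y (Suc j))" using True by simp
      show "1 \<le> r2" by fact
      show "inv_stop lam \<tau> y x (Suc j) r2" using "1.prems"(2) r2 st by simp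
      show "\<forall>r'. 1 \<le> r' \<longrightarrow> r' < r2 \<longrightarrow> \<not> inv_stop lam \<tau> y x (Suc j) r'"
      proof (intro allI impI)
        fix r' assume "1 \<le> r'" "r' < r2"
        then have "\<not> inv_stop lam \<tau> y x j (Suc r')" using "1.prems"(3) r2 by auto
        then show "\<not> inv_stop lam \<tau> y x (Suc j) r'" using st by simp
      qed
    qed
    then show ?thesis using True r2 by (subst hless_unf) simp
  qed
qed

definition I :: "nat list \<Rightarrow> filling \<Rightarrow> (nat \<times> nat \<times> nat) set" where
  "I lam \<tau> = {(i, i', j). box lam i j \<and> box lam i' j \<and> \<tau> i j < \<tau> i' j \<and> hless lam \<tau> j i' i}"

lemma inv_pair_iff:
  "inv_pair lam \<tau> i i' j \<longleftrightarrow> box lam i j \<and> box lam i' j \<and> \<tau> i j < \<tau> i' j \<and> hless lam \<tau> j i' i"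
proof -
  define P where "P = (\<lambda>r. 1 \<le> r \<and> inv_stop lam \<tau> i i' j r)"
  have ex: "P (Suc (lam ! i))" by (auto simp: P_def inv_stop_def box_def)
  define r where "r = (LEAST r. P r)"
  have Pr: "P r" using ex unfolding r_def by (rule LeastI)
  have mn: "\<forall>r'. 1 \<le> r' \<longrightarrow> r' < r \<longrightarrow> \<not> inv_stop lam \<tau> i i' j r'"
    using not_less_Least[of _ P] unfolding r_def P_def by blast
  have h: "hless lam \<tau> j i' i = (if box lam i (j+r) \<and> box lam i' (j+r) then \<tau> i' (j+r) < \<tau> i (j+r) else i' < i)"
    using hless_stop[of r lam \<tau> i i' j] Pr mn unfolding P_def by blast
  show ?thesis unfolding inv_pair_def Let_def P_def[symmetric] r_def[symmetric] h
    by auto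
qed

lemma inv_count_I: "inv_count lam \<tau> = card (I lam \<tau>)"
  unfolding inv_count_def I_def by (rule arg_cong[where f=card]) (auto simp: inv_pair_iff)


lemma finite_down: "finite {i'. box lam i' j \<and> P i'}"
proof (rule finite_subset[of _ "{..<length lam}"])
  show "{i'. box lam i' j \<and> P i'} \<subseteq> {..<length lam}" by (auto simp: box_def)
qed simp

lemma height_lt:
  assumes "is_shape lam" "box lam y j" "hless lam \<tau> j y x"
  shows "height lam \<tau> y j < height lam \<tau> x j"
proof -
  have sub: "{i'. box lam i' j \<and> i' \<noteq> y \<and> hless lam \<tau> j i' y} \<subseteq> {i'. box lam i' j \<and> i' \<noteq> x \<and> hless lam \<tau> j i' x}"
  proof
    fix c assume "c \<in> {i'. box lam i' j \<and> i' \<noteq> y \<and> hless lam \<tau> j i' y}"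
    then have c: "box lam c j" "hless lam \<tau> j c y" by auto
    then have "hless lam \<tau> j c x" using hless_trans[OF assms(1) c(2) assms(3)] by simp
    moreover then have "c \<noteq> x" using hless_irrefl by metis
    ultimately show "c \<in> {i'. box lam i' j \<and> i' \<noteq> x \<and> hless lam \<tau> j i' x}" using c by simp
  qed
  have "y \<in> {i'. box lam i' j \<and> i' \<noteq> x \<and> hless lam \<tau> j i' x}"
    using assms hless_irrefl by (metis (mono_tags, lifting) mem_Collect_eq)
  moreover have "y \<notin> {i'. box lam i' j \<and> i' \<noteq> y \<and> hless lam \<tau> j i' y}" by simp
  ultimately have "{i'. box lam i' j \<and> i' \<noteq> y \<and> hless lam \<tau> j i' y} \<subset> {i'. box lam i' j \<and> i' \<noteq> x \<and> hless lam \<tau> j i' x}"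
    using sub by blast
  then show ?thesis unfolding height_def by (intro psubset_card_mono finite_down)
qed

lemma height_succ:
  assumes "is_shape lam" "box lam y j" "hless lam \<tau> j y x"
    and "\<forall>c. box lam c j \<longrightarrow> \<not> (hless lam \<tau> j y c \<and> hless lam \<tau> j c x)"
  shows "height lam \<tau> x j = Suc (height lam \<tau> y j)"
proof -
  have "{i'. box lam i' j \<and> i' \<noteq> x \<and> hless lam \<tau> j i' x} = insert y {i'. box lam i' j \<and> i' \<noteq> y \<and> hless lam \<tau> j i' y}"
  proof (intro equalityI subsetI)
    fix c assume "c \<in> {i'. box lam i' j \<and> i' \<noteq> x \<and> hless lam \<tau> j i' x}"
    then have c: "box lam c j" "c \<noteq> x" "hless lam \<tau> j c x" by auto
    show "c \<in> insert y {i'. box lam i' j \<and> i' \<noteq> y \<and> hless lam \<tau> j i' y}"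
    proof (cases "c = y")
      case False
      then have "hless lam \<tau> j c y \<or> hless lam \<tau> j y c" using hless_total by blast
      then have "hless lam \<tau> j c y" using assms(4) c by blast
      then show ?thesis using c False by simp
    qed simp
  next
    fix c assume "c \<in> insert y {i'. box lam i' j \<and> i' \<noteq> y \<and> hless lam \<tau> j i' y}"
    then have "c = y \<or> (box lam c j \<and> hless lam \<tau> j c y)" by auto
    then have c: "box lam c j" "hless lam \<tau> j c x" using assms(2,3) hless_trans[OF assms(1) _ assms(3)] by auto
    then have "c \<noteq> x" using hless_irrefl by metis
    then show "c \<in> {i'. box lam i' j \<and> i' \<noteq> x \<and> hless lam \<tau> j i' x}" using c by simp
  qed
  moreover have "y \<notin> {i'. box lam i' j \<and> i' \<noteq> y \<and> hless lam \<tau> j i' y}" by simp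
  ultimately show ?thesis unfolding height_def by (simp add: finite_down)
qed

lemma adjacent:
  assumes "is_shape lam" "box lam a j" "box lam b j" "a \<noteq> b"
    and "\<bar>int (height lam \<tau> a j) - int (height lam \<tau> b j)\<bar> = 1"
    and "box lam c j" "c \<noteq> a" "c \<noteq> b"
  shows "hless lam \<tau> j c a \<longleftrightarrow> hless lam \<tau> j c b"
proof -
  have gen: "hless lam \<tau> j c x \<longleftrightarrow> hless lam \<tau> j c y"
    if "box lam x j" "box lam y j" "hless lam \<tau> j x y" "c \<noteq> x" "c \<noteq> y"
       "\<bar>int (height lam \<tau> x j) - int (height lam \<tau> y j)\<bar> = 1" for x y
  proof
    assume "hless lam \<tau> j c x" then show "hless lam \<tau> j c y" using hless_trans[OF assms(1)] that by blast
  next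
    assume cy: "hless lam \<tau> j c y"
    show "hless lam \<tau> j c x"
    proof (rule ccontr)
      assume "\<not> hless lam \<tau> j c x"
      then have "hless lam \<tau> j x c" using hless_total that by blast
      then have "height lam \<tau> x j < height lam \<tau> c j" "height lam \<tau> c j < height lam \<tau> y j"
        using height_lt[OF assms(1)] that assms cy by auto
      then show False using that(6) by linarith
    qed
  qed
  show ?thesis
  proof (cases "hless lam \<tau> j a b")
    case True then show ?thesis using gen[of a b] assms by auto
  next
    case False
    then have "hless lam \<tau> j b a" using hless_total assms by blast
    then show ?thesis using gen[of b a] assms by (auto simp: abs_minus_commute)
  qed
qed

lemma hless_agree:
  "(\<forall>i k. j < k \<longrightarrow> \<sigma> i k = \<tau> i k) \<Longrightarrow> hless lam \<sigma> j x y = hless lam \<tau> j x y"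
proof (induction lam \<tau> j x y rule: hless.induct)
  case (1 lam \<tau> j i i')
  have "\<sigma> i (Suc j) = \<tau> i (Suc j)" "\<sigma> i' (Suc j) = \<tau> i' (Suc j)" using "1.prems" by auto
  moreover have "box lam i (Suc j) \<and> box lam i' (Suc j) \<Longrightarrow> hless lam \<sigma> (Suc j) i i' = hless lam \<tau> (Suc j) i i'"
    using "1.IH" "1.prems" by auto
  ultimately show ?case by (subst hless_unf, subst (2) hless_unf) auto
qed

lemma height_agree:
  "(\<forall>i k. j < k \<longrightarrow> \<sigma> i k = \<tau> i k) \<Longrightarrow> height lam \<sigma> x j = height lam \<tau> x j"
  unfolding height_def using hless_agree[of j \<sigma> \<tau> lam] by simp


definition pi :: "nat \<Rightarrow> nat \<Rightarrow> nat \<Rightarrow> nat" where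
  "pi a b x = (if x = a then b else if x = b then a else x)"

lemma pi_pi[simp]: "pi a b (pi a b x) = x" by (auto simp: pi_def)

lemma swap_le: "k \<le> j \<Longrightarrow> swap_rows \<tau> a b j i k = \<tau> (pi a b i) k"
  by (auto simp: swap_rows_def pi_def)

lemma swap_gt: "j < k \<Longrightarrow> swap_rows \<tau> a b j i k = \<tau> i k"
  by (auto simp: swap_rows_def)

lemma box_pi: "box lam a j \<Longrightarrow> box lam b j \<Longrightarrow> k \<le> j \<Longrightarrow> box lam (pi a b x) k = box lam x k"
  by (auto simp: pi_def box_def)

lemma less_pi:
  assumes "is_shape lam" "box lam a j" "box lam b j" "m \<le> j" "\<not> (box lam x m \<and> box lam y m)"
  shows "(pi a b x < pi a b y) = (x < y)"
proof -
  have am: "box lam a m" "box lam b m" using assms by (auto simp: box_def)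
  show ?thesis
  proof (cases "x \<in> {a, b}")
    case True
    then have "\<not> box lam y m" using assms am by auto
    then show ?thesis using True box_lt[OF assms(1) am(1), of y] box_lt[OF assms(1) am(2), of y] am
      by (auto simp: pi_def)
  next
    case False
    show ?thesis
    proof (cases "y \<in> {a, b}")
      case True
      then have "\<not> box lam x m" using assms am by auto
      then show ?thesis using True False box_lt[OF assms(1) am(1), of x] box_lt[OF assms(1) am(2), of x] am
        by (auto simp: pi_def)
    next
      case F2: False
      then show ?thesis using False by (simp add: pi_def)
    qed
  qed
qed

lemma adj2:
  assumes "\<forall>c. box lam c j \<longrightarrow> c \<noteq> a \<longrightarrow> c \<noteq> b \<longrightarrow> (hless lam \<tau> j c a \<longleftrightarrow> hless lam \<tau> j c b)"
    "box lam c j" "c \<noteq> a" "c \<noteq> b"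
  shows "hless lam \<tau> j a c \<longleftrightarrow> hless lam \<tau> j b c"
  using assms hless_total hless_asym by metis

lemma hless_swap:
  assumes shp: "is_shape lam" and ab: "box lam a j" "box lam b j" "\<tau> a j \<noteq> \<tau> b j"
    and adj: "\<forall>c. box lam c j \<longrightarrow> c \<noteq> a \<longrightarrow> c \<noteq> b \<longrightarrow> (hless lam \<tau> j c a \<longleftrightarrow> hless lam \<tau> j c b)"
  shows "k < j \<Longrightarrow> hless lam (swap_rows \<tau> a b j) k x y = hless lam \<tau> k (pi a b x) (pi a b y)"
proof -
  let ?\<sigma> = "swap_rows \<tau> a b j"
  have step: "hless lam ?\<sigma> k x y = hless lam \<tau> k (pi a b x) (pi a b y)"
    if kj: "k < j" and good: "\<forall>x y. box lam x (Suc k) \<longrightarrow> box lam y (Suc k) \<longrightarrow> \<tau> (pi a b x) (Suc k) = \<tau> (pi a b y) (Suc k)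
       \<longrightarrow> hless lam ?\<sigma> (Suc k) x y = hless lam \<tau> (Suc k) (pi a b x) (pi a b y)" for k x y
  proof -
    have bx: "box lam (pi a b z) (Suc k) = box lam z (Suc k)" for z using box_pi[OF ab(1,2)] kj by simp
    have sv: "?\<sigma> z (Suc k) = \<tau> (pi a b z) (Suc k)" for z using swap_le kj by simp
    show ?thesis
    proof (cases "box lam x (Suc k) \<and> box lam y (Suc k)")
      case False
      then show ?thesis using less_pi[OF shp ab(1,2), of "Suc k" x y] kj bx
        by (subst hless_unf, subst (2) hless_unf) auto
    next
      case True
      then show ?thesis using good bx sv
        by (subst hless_unf, subst (2) hless_unf) auto
    qed
  qed
  have goodj: "\<forall>x y. box lam x j \<longrightarrow> box lam y j \<longrightarrow> \<tau> (pi a b x) j = \<tau> (pi a b y) j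
       \<longrightarrow> hless lam ?\<sigma> j x y = hless lam \<tau> j (pi a b x) (pi a b y)"
  proof (intro allI impI)
    fix x y assume bxy: "box lam x j" "box lam y j" and eq: "\<tau> (pi a b x) j = \<tau> (pi a b y) j"
    have "hless lam ?\<sigma> j x y = hless lam \<tau> j x y" using hless_agree[of j ?\<sigma> \<tau>] swap_gt by simp
    also have "\<dots> = hless lam \<tau> j (pi a b x) (pi a b y)"
    proof -
      have A2: "hless lam \<tau> j a c \<longleftrightarrow> hless lam \<tau> j b c" if "box lam c j" "c \<noteq> a" "c \<noteq> b" for c
        using adj2[OF adj that] .
      have pa: "pi a b a = b" "pi a b b = a" "\<And>z. z \<noteq> a \<Longrightarrow> z \<noteq> b \<Longrightarrow> pi a b z = z"
        by (auto simp: pi_def)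
      show ?thesis
      proof (cases "x = y")
        case False
        show ?thesis
        proof (cases "x = a \<or> x = b")
          case True
          then show ?thesis
          proof
            assume xa: "x = a"
            show ?thesis
            proof (cases "y = b")
              case True then show ?thesis using eq xa pa ab(3) by simp
            next
              case F: False
              then have "y \<noteq> a" using False xa by simp
              then show ?thesis using A2[of y] bxy xa pa F by simp
            qed
          next
            assume xb: "x = b"
            show ?thesis
            proof (cases "y = a")
              case True then show ?thesis using eq xb pa ab(3) by simp
            next
              case F: False
              then have "y \<noteq> b" using False xb by simp
              then show ?thesis using A2[of y] bxy xb pa F by simp
            qed
          qed
        next
          case xn: False
          show ?thesis
          proof (cases "y = a \<or> y = b")
            case True
            then show ?thesis using adj bxy xn pa by auto
          next
            case False then show ?thesis using xn pa by simp
          qed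
        qed
      qed (simp add: hless_irrefl)
    qed
    finally show "hless lam ?\<sigma> j x y = hless lam \<tau> j (pi a b x) (pi a b y)" .
  qed
  have main: "\<forall>x y. hless lam ?\<sigma> k x y = hless lam \<tau> k (pi a b x) (pi a b y)" if "k < j" for k
    using that
  proof (induction "j - Suc k" arbitrary: k)
    case 0
    then have "Suc k = j" by simp
    then show ?case using step[of k] goodj 0 by metis
  next
    case (Suc n)
    then have "\<forall>x y. hless lam ?\<sigma> (Suc k) x y = hless lam \<tau> (Suc k) (pi a b x) (pi a b y)"
      by (metis Suc_diff_Suc diff_Suc_1 less_Suc_eq nat.inject zero_less_Suc zero_less_diff)
    then show ?case using step[of k] Suc.prems by blast
  qed
  show "k < j \<Longrightarrow> ?thesis" using main by blast
qed


definition fmap :: "nat \<Rightarrow> nat \<Rightarrow> nat \<Rightarrow> nat \<times> nat \<times> nat \<Rightarrow> nat \<times> nat \<times> nat" where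
  "fmap a b j t = (case t of (i, i', k) \<Rightarrow> if k \<le> j then (pi a b i, pi a b i', k) else (i, i', k))"

lemma fmap_fmap[simp]: "fmap a b j (fmap a b j t) = t"
  by (cases t) (auto simp: fmap_def)

lemma I_swap:
  assumes shp: "is_shape lam" and ab: "box lam a j" "box lam b j" "\<tau> a j \<noteq> \<tau> b j"
    and adj: "\<forall>c. box lam c j \<longrightarrow> c \<noteq> a \<longrightarrow> c \<noteq> b \<longrightarrow> (hless lam \<tau> j c a \<longleftrightarrow> hless lam \<tau> j c b)"
  shows "t \<in> I lam (swap_rows \<tau> a b j) - {(a,b,j),(b,a,j)} \<longleftrightarrow> fmap a b j t \<in> I lam \<tau> - {(a,b,j),(b,a,j)}"
proof -
  obtain i i' k where t: "t = (i, i', k)" by (cases t) auto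
  let ?\<sigma> = "swap_rows \<tau> a b j"
  have A2: "hless lam \<tau> j a c \<longleftrightarrow> hless lam \<tau> j b c" if "box lam c j" "c \<noteq> a" "c \<noteq> b" for c
    using adj2[OF adj that] .
  consider "k < j" | "k = j" | "j < k" by linarith
  then show ?thesis
  proof cases
    case 1
    then show ?thesis using hless_swap[OF shp ab adj 1] swap_le[of k j] box_pi[OF ab(1,2), of k] t
      by (auto simp: I_def fmap_def)
  next
    case 2
    have hl: "hless lam ?\<sigma> j x y = hless lam \<tau> j x y" for x y
      using hless_agree[of j ?\<sigma> \<tau>] swap_gt by simp
    have key: "hless lam \<tau> j i' i = hless lam \<tau> j (pi a b i') (pi a b i)"
      if "box lam i j" "box lam i' j" "i \<noteq> i'" "(i, i', j) \<notin> {(a,b,j),(b,a,j)}"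
      using that adj A2 unfolding pi_def by auto
    have pis: "(pi a b i, pi a b i', j) \<in> {(a,b,j),(b,a,j)} \<longleftrightarrow> (i, i', j) \<in> {(a,b,j),(b,a,j)}"
      unfolding pi_def by auto
    show ?thesis using 2 t hl key pis swap_le[of j j] box_pi[OF ab(1,2), of j] 
      by (auto simp: I_def fmap_def)
  next
    case 3
    have "hless lam ?\<sigma> k x y = hless lam \<tau> k x y" for x y
      using hless_agree[of k ?\<sigma> \<tau>] swap_gt 3 by simp
    then show ?thesis using 3 t swap_gt[of j k] by (auto simp: I_def fmap_def)
  qed
qed

lemma finite_I: "finite (I lam \<tau>)"
proof (rule finite_subset)
  show "I lam \<tau> \<subseteq> {..<length lam} \<times> {..<length lam} \<times> {..<sum_list lam}"
  proof
    fix t assume "t \<in> I lam \<tau>"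
    then obtain i i' k where t: "t = (i,i',k)" "box lam i k" "box lam i' k" by (auto simp: I_def)
    then have "lam ! i \<le> sum_list lam" by (simp add: box_def member_le_sum_list)
    then show "t \<in> {..<length lam} \<times> {..<length lam} \<times> {..<sum_list lam}" using t by (auto simp: box_def)
  qed
qed auto

lemma card_I_swap:
  assumes shp: "is_shape lam" and ab: "box lam a j" "box lam b j" "\<tau> a j \<noteq> \<tau> b j"
    and adj: "\<forall>c. box lam c j \<longrightarrow> c \<noteq> a \<longrightarrow> c \<noteq> b \<longrightarrow> (hless lam \<tau> j c a \<longleftrightarrow> hless lam \<tau> j c b)"
  shows "card (I lam (swap_rows \<tau> a b j) - {(a,b,j),(b,a,j)}) = card (I lam \<tau> - {(a,b,j),(b,a,j)})"
proof -
  let ?A = "I lam (swap_rows \<tau> a b j) - {(a,b,j),(b,a,j)}"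
  let ?B = "I lam \<tau> - {(a,b,j),(b,a,j)}"
  have iff: "t \<in> ?A \<longleftrightarrow> fmap a b j t \<in> ?B" for t by (rule I_swap[OF assms])
  have "fmap a b j ` ?A = ?B"
  proof (intro equalityI subsetI)
    fix t assume "t \<in> fmap a b j ` ?A"
    then obtain u where "u \<in> ?A" "t = fmap a b j u" by blast
    then show "t \<in> ?B" using iff by simp
  next
    fix t assume "t \<in> ?B"
    then have "fmap a b j (fmap a b j t) \<in> ?B" by simp
    then have "fmap a b j t \<in> ?A" using iff by simp
    then have "fmap a b j (fmap a b j t) \<in> fmap a b j ` ?A" by (rule imageI)
    then show "t \<in> fmap a b j ` ?A" by simp
  qed
  moreover have "inj_on (fmap a b j) ?A"
  proof (rule inj_onI)
    fix x y assume "fmap a b j x = fmap a b j y"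
    then have "fmap a b j (fmap a b j x) = fmap a b j (fmap a b j y)" by simp
    then show "x = y" by simp
  qed
  ultimately show ?thesis using card_image[of "fmap a b j" ?A] by simp
qed

lemma card_split: "finite A \<Longrightarrow> card A = card (A - P) + card (A \<inter> P)"
proof -
  assume f: "finite A"
  have "A = (A - P) \<union> (A \<inter> P)" by blast
  then have "card A = card ((A - P) \<union> (A \<inter> P))" by simp
  also have "\<dots> = card (A - P) + card (A \<inter> P)" using f by (intro card_Un_disjoint) auto
  finally show ?thesis .
qed

lemma adm_inv_le:
  assumes shp: "is_shape lam" and st: "adm_step lam \<tau> \<sigma>"
  shows "card (I lam \<sigma>) \<le> card (I lam \<tau>) + 1"
proof -
  obtain a b j where ab: "box lam a j" "box lam b j" "a \<noteq> b" "\<tau> a j < \<tau> b j"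
    and h: "\<bar>int (height lam \<tau> a j) - int (height lam \<tau> b j)\<bar> = 1"
    and \<sigma>: "\<sigma> = swap_rows \<tau> a b j"
    using st unfolding adm_step_def by blast
  have adj: "\<forall>c. box lam c j \<longrightarrow> c \<noteq> a \<longrightarrow> c \<noteq> b \<longrightarrow> (hless lam \<tau> j c a \<longleftrightarrow> hless lam \<tau> j c b)"
    using adjacent[OF shp ab(1-3) h] by blast
  let ?P = "{(a,b,j),(b,a,j)}"
  have c: "card (I lam \<sigma> - ?P) = card (I lam \<tau> - ?P)"
    using card_I_swap[OF shp ab(1,2) _ adj] ab(4) \<sigma> by simp
  have "I lam \<sigma> \<inter> ?P \<subseteq> {(a,b,j)} \<or> I lam \<sigma> \<inter> ?P \<subseteq> {(b,a,j)}"
    using hless_asym[of lam \<sigma> j a b] by (auto simp: I_def)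
  then have "card (I lam \<sigma> \<inter> ?P) \<le> 1" by (metis card.empty card_insert_le card_mono finite.emptyI finite.insertI is_singletonI is_singleton_altdef)
  moreover have "card (I lam \<tau> - ?P) \<le> card (I lam \<tau>)" by (simp add: card_mono finite_I)
  ultimately show ?thesis using card_split[OF finite_I, of lam \<sigma> ?P] c by linarith
qed


lemma relpow_bound:
  assumes shp: "is_shape lam"
  shows "(adm_step lam ^^ n) T \<tau> \<Longrightarrow> card (I lam \<tau>) \<le> card (I lam T) + n"
proof (induction n arbitrary: \<tau>)
  case 0 then show ?case by simp
next
  case (Suc n)
  then obtain \<rho> where "(adm_step lam ^^ n) T \<rho>" "adm_step lam \<rho> \<tau>"
    by (auto simp: relpowp_Suc_right)
  then show ?case using Suc.IH adm_inv_le[OF shp] by fastforce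
qed

lemma colsorted:
  assumes shp: "is_shape lam" and cw: "col_weak lam T"
  shows "i \<le> i' \<Longrightarrow> box lam i' k \<Longrightarrow> T i k \<le> T i' k"
proof (induction i' rule: dec_induct)
  case base then show ?case by simp
next
  case (step n)
  have "box lam n k" using shape_mono[OF shp, of n "Suc n" k] step by simp
  then have "T i k \<le> T n k" using step by simp
  also have "T n k \<le> T (Suc n) k" using cw step unfolding col_weak_def by blast
  finally show ?case .
qed

lemma hless_sorted:
  "(\<forall>i i' k. i < i' \<longrightarrow> box lam i' k \<longrightarrow> T i k \<le> T i' k) \<Longrightarrow> i < i' \<Longrightarrow> hless lam T k i i'"
proof (induction lam T k i i' rule: hless.induct)
  case (1 lam T j i i')
  show ?case using 1 by (subst hless_unf) (auto simp: le_less)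
qed

lemma I_sorted_empty:
  assumes "\<forall>i i' k. i < i' \<longrightarrow> box lam i' k \<longrightarrow> T i k \<le> T i' k"
  shows "I lam T = {}"
proof -
  { fix i i' k assume "(i, i', k) \<in> I lam T"
    then have h: "box lam i k" "box lam i' k" "T i k < T i' k" "hless lam T k i' i" by (auto simp: I_def)
    have False
    proof (cases "i' < i")
      case True then show False using assms h by fastforce
    next
      case False
      then have "i < i'" using h by (cases "i = i'") auto
      then show False using hless_sorted[OF assms] h hless_asym by blast
    qed }
  then show ?thesis by auto
qed


lemma I_empty_sorted:
  assumes shp: "is_shape lam" and e: "I lam \<tau> = {}"
  shows "\<forall>i i' k. i < i' \<longrightarrow> box lam i' k \<longrightarrow> \<tau> i k \<le> \<tau> i' k"
proof -
  have SH: "\<forall>i i'. i < i' \<longrightarrow> box lam i' m \<longrightarrow> \<tau> i m \<le> \<tau> i' m"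
    if H: "\<forall>i i'. i < i' \<longrightarrow> hless lam \<tau> m i i'" for m
  proof (intro allI impI)
    fix i i' assume "i < i'" "box lam i' m"
    then have "box lam i m" using shape_mono[OF shp, of i i' m] by simp
    show "\<tau> i m \<le> \<tau> i' m"
    proof (rule ccontr)
      assume "\<not> ?thesis"
      then have "(i', i, m) \<in> I lam \<tau>" using H \<open>i < i'\<close> \<open>box lam i m\<close> \<open>box lam i' m\<close> by (auto simp: I_def)
      then show False using e by simp
    qed
  qed
  have H: "\<forall>i i'. i < i' \<longrightarrow> hless lam \<tau> j i i'" for j
  proof (induction "sum_list lam - j" arbitrary: j)
    case 0
    have "\<not> box lam i (Suc j)" for i
    proof
      assume "box lam i (Suc j)"
      then have "lam ! i \<le> sum_list lam" "Suc j < lam ! i" by (auto simp: box_def member_le_sum_list)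
      then show False using 0 by simp
    qed
    then show ?case by (subst hless_unf) simp
  next
    case (Suc n)
    have "n = sum_list lam - Suc j" using Suc.hyps(2) by simp
    then have IH: "\<forall>i i'. i < i' \<longrightarrow> hless lam \<tau> (Suc j) i i'" by (rule Suc.hyps(1))
    have S1: "\<forall>i i'. i < i' \<longrightarrow> box lam i' (Suc j) \<longrightarrow> \<tau> i (Suc j) \<le> \<tau> i' (Suc j)"
      by (rule SH[OF IH])
    show ?case
    proof (intro allI impI)
      fix i i' :: nat assume "i < i'"
      then show "hless lam \<tau> j i i'" using IH S1 by (subst hless_unf) (auto simp: le_less)
    qed
  qed
  show ?thesis
  proof (intro allI impI)
    fix i i' k assume "i < i'" "box lam i' k"
    then show "\<tau> i k \<le> \<tau> i' k" using SH[OF H[of k]] by blast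
  qed
qed

lemma colrows:
  assumes shp: "is_shape lam"
  shows "\<exists>m. filter (\<lambda>k. j < lam ! k) [0..<length lam] = [0..<m] \<and> (\<forall>k. box lam k j \<longleftrightarrow> k < m)"
proof -
  have "\<exists>m. filter (\<lambda>k. j < lam ! k) [0..<n] = [0..<m] \<and> (\<forall>k. (k < n \<and> j < lam ! k) \<longleftrightarrow> k < m)"
    if "n \<le> length lam" for n
    using that
  proof (induction n)
    case 0 then show ?case by (intro exI[of _ 0]) simp
  next
    case (Suc n)
    then obtain m where m: "filter (\<lambda>k. j < lam ! k) [0..<n] = [0..<m]" "\<forall>k. (k < n \<and> j < lam ! k) \<longleftrightarrow> k < m"
      by auto
    show ?case
    proof (cases "j < lam ! n")
      case True
      then have "box lam n j" using Suc.prems by (simp add: box_def)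
      have allk: "\<forall>k<n. j < lam ! k"
      proof (intro allI impI)
        fix k assume "k < n"
        then have "box lam k j" using shape_mono[OF shp, of k n j] \<open>box lam n j\<close> by simp
        then show "j < lam ! k" by (simp add: box_def)
      qed
      have "\<forall>k. k < n \<longleftrightarrow> k < m" using m(2) allk by blast
      then have "m = n" by (metis less_irrefl linorder_neqE_nat)
      have f: "filter (\<lambda>k. j < lam ! k) [0..<Suc n] = [0..<Suc n]"
        using m(1) \<open>m = n\<close> True by simp
      have "\<forall>k. (k < Suc n \<and> j < lam ! k) \<longleftrightarrow> k < Suc n"
        using allk True less_Suc_eq by auto
      then show ?thesis using f by blast
    next
      case False
      have f: "filter (\<lambda>k. j < lam ! k) [0..<Suc n] = [0..<m]" using m(1) False by simp
      have "\<forall>k. (k < Suc n \<and> j < lam ! k) \<longleftrightarrow> k < m"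
      proof (intro allI)
        fix k show "(k < Suc n \<and> j < lam ! k) \<longleftrightarrow> k < m"
          using m(2)[rule_format, of k] False less_Suc_eq[of k n] by auto
      qed
      then show ?thesis using f by blast
    qed
  qed
  from this[of "length lam"] show ?thesis by (auto simp: box_def)
qed

lemma st_sorted_id:
  assumes shp: "is_shape lam" and z: "\<forall>i j. \<not> box lam i j \<longrightarrow> \<tau> i j = 0"
    and s: "\<forall>i i' k. i < i' \<longrightarrow> box lam i' k \<longrightarrow> \<tau> i k \<le> \<tau> i' k"
  shows "st lam \<tau> = \<tau>"
proof (intro ext)
  fix i j
  show "st lam \<tau> i j = \<tau> i j"
  proof (cases "box lam i j")
    case True
    obtain m where m: "filter (\<lambda>k. j < lam ! k) [0..<length lam] = [0..<m]" "\<forall>k. box lam k j \<longleftrightarrow> k < m"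
      using colrows[OF shp] by blast
    have "sorted (map (\<lambda>k. \<tau> k j) [0..<m])"
      unfolding sorted_iff_nth_mono_less using s m(2) by auto
    then show ?thesis using True m unfolding st_def by (simp add: sorted_sort_id)
  next
    case False then show ?thesis using z by (simp add: st_def)
  qed
qed


lemma sort_mset_eq: "mset xs = mset ys \<Longrightarrow> sort xs = sort ys"
  by (metis mset_sort properties_for_sort sorted_sort)

lemma st_swap:
  assumes shp: "is_shape lam" and ab: "box lam a k" "box lam b k"
  shows "st lam (swap_rows \<tau> a b k) = st lam \<tau>"
proof (intro ext)
  fix i j
  obtain m where m: "filter (\<lambda>r. j < lam ! r) [0..<length lam] = [0..<m]" "\<forall>r. box lam r j \<longleftrightarrow> r < m"
    using colrows[OF shp] by blast
  have "sort (map (\<lambda>r. swap_rows \<tau> a b k r j) [0..<m]) = sort (map (\<lambda>r. \<tau> r j) [0..<m])"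
  proof (cases "j \<le> k")
    case True
    then have "box lam a j" "box lam b j" using ab by (auto simp: box_def)
    then have "a < m" "b < m" using m(2) by blast+
    have inj: "inj_on (pi a b) X" for X
    proof (rule inj_onI)
      fix x y assume "pi a b x = pi a b y"
      then have "pi a b (pi a b x) = pi a b (pi a b y)" by simp
      then show "x = y" by simp
    qed
    have d: "distinct (map (pi a b) [0..<m])" using inj by (simp add: distinct_map)
    have lt: "x < m \<Longrightarrow> pi a b x < m" for x using \<open>a < m\<close> \<open>b < m\<close> by (simp add: pi_def)
    have "set (map (pi a b) [0..<m]) = set [0..<m]"
    proof (intro equalityI subsetI)
      fix x assume "x \<in> set (map (pi a b) [0..<m])"
      then show "x \<in> set [0..<m]" using lt by auto
    next
      fix x assume "x \<in> set [0..<m]"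
      then have "pi a b x \<in> set [0..<m]" using lt by simp
      then have "pi a b (pi a b x) \<in> set (map (pi a b) [0..<m])" by (metis imageI set_map)
      then show "x \<in> set (map (pi a b) [0..<m])" by simp
    qed
    then have "mset (map (pi a b) [0..<m]) = mset [0..<m]"
      using d by (subst set_eq_iff_mset_eq_distinct[symmetric]) auto
    then have "mset (map (\<lambda>r. \<tau> r j) (map (pi a b) [0..<m])) = mset (map (\<lambda>r. \<tau> r j) [0..<m])"
      by (simp only: mset_map)
    moreover have "map (\<lambda>r. swap_rows \<tau> a b k r j) [0..<m] = map (\<lambda>r. \<tau> r j) (map (pi a b) [0..<m])"
      using True by (simp add: swap_le)
    ultimately show ?thesis by (metis sort_mset_eq)
  next
    case False then show ?thesis by (simp add: swap_gt)
  qed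
  moreover have "st lam \<sigma> i j = (if box lam i j then sort (map (\<lambda>r. \<sigma> r j) [0..<m]) ! i else 0)" for \<sigma>
    unfolding st_def using m(1) by simp
  ultimately show "st lam (swap_rows \<tau> a b k) i j = st lam \<tau> i j" by simp
qed

lemma adj_inv:
  assumes shp: "is_shape lam"
  shows "box lam p j \<Longrightarrow> box lam q j \<Longrightarrow> \<tau> p j < \<tau> q j \<Longrightarrow> hless lam \<tau> j q p \<Longrightarrow>
    \<exists>a b. box lam a j \<and> box lam b j \<and> hless lam \<tau> j a b \<and>
       height lam \<tau> b j = Suc (height lam \<tau> a j) \<and> \<tau> b j < \<tau> a j"
proof (induction "height lam \<tau> p j - height lam \<tau> q j" arbitrary: p q rule: less_induct)
  case less
  show ?case
  proof (cases "\<forall>c. box lam c j \<longrightarrow> \<not> (hless lam \<tau> j q c \<and> hless lam \<tau> j c p)")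
    case True
    then show ?thesis using height_succ[OF shp less.prems(2,4) True] less.prems by blast
  next
    case False
    then obtain c where c: "box lam c j" "hless lam \<tau> j q c" "hless lam \<tau> j c p" by blast
    have hq: "height lam \<tau> q j < height lam \<tau> c j" using height_lt[OF shp] c less.prems by blast
    have hc: "height lam \<tau> c j < height lam \<tau> p j" using height_lt[OF shp] c less.prems by blast
    show ?thesis
    proof (cases "\<tau> c j < \<tau> q j")
      case True
      show ?thesis using less.hyps[of c q] c True less.prems hq hc by simp
    next
      case False
      then have "\<tau> p j < \<tau> c j" using less.prems by simp
      show ?thesis using less.hyps[of p c] c \<open>\<tau> p j < \<tau> c j\<close> less.prems hq hc by simp
    qed
  qed
qed


lemma exist_path:
  assumes shp: "is_shape lam"
  shows "(\<forall>i j. \<not> box lam i j \<longrightarrow> \<tau> i j = 0) \<Longrightarrow> row_standard lam \<tau> \<Longrightarrow> card (I lam \<tau>) = n \<Longrightarrow>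
    (adm_step lam ^^ n) (st lam \<tau>) \<tau>"
proof (induction n arbitrary: \<tau>)
  case 0
  then have "I lam \<tau> = {}" using finite_I by (metis card_0_eq)
  then have "st lam \<tau> = \<tau>" using st_sorted_id[OF shp] I_empty_sorted[OF shp] "0.prems"(1) by blast
  then show ?case by simp
next
  case (Suc n)
  then have "I lam \<tau> \<noteq> {}" by auto
  then obtain p q k where "(p, q, k) \<in> I lam \<tau>" by auto
  then have pq: "box lam p k" "box lam q k" "\<tau> p k < \<tau> q k" "hless lam \<tau> k q p" by (auto simp: I_def)
  obtain a b where ab: "box lam a k" "box lam b k" "hless lam \<tau> k a b"
     "height lam \<tau> b k = Suc (height lam \<tau> a k)" "\<tau> b k < \<tau> a k"
    using adj_inv[OF shp pq] by blast
  have anb: "a \<noteq> b" using ab(3) hless_irrefl by metis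
  define \<tau>0 where "\<tau>0 = swap_rows \<tau> a b k"
  have bk: "swap_rows \<tau>0 a b k = \<tau>" unfolding \<tau>0_def by (intro ext) (auto simp: swap_rows_def)
  have agr: "\<forall>i k'. k < k' \<longrightarrow> \<tau>0 i k' = \<tau> i k'" unfolding \<tau>0_def by (simp add: swap_gt)
  have hl: "hless lam \<tau>0 k = hless lam \<tau> k" using hless_agree[OF agr] by blast
  have ht: "height lam \<tau>0 x k = height lam \<tau> x k" for x using height_agree[OF agr] by blast
  have v: "\<tau>0 a k = \<tau> b k" "\<tau>0 b k = \<tau> a k" unfolding \<tau>0_def by (auto simp: swap_rows_def)
  have rs: "row_standard lam \<tau>" by fact
  have ra: "box lam a (Suc k) \<Longrightarrow> \<tau> a k < \<tau> a (Suc k)" using rs by (simp add: row_standard_def)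
  have rb: "box lam b (Suc k) \<Longrightarrow> \<tau> b k < \<tau> b (Suc k)" using rs by (simp add: row_standard_def)
  have rab: "\<tau> a k < \<tau> b (Suc k)" if "box lam b (Suc k)"
  proof -
    have "box lam a (Suc k)"
    proof (rule ccontr)
      assume "\<not> box lam a (Suc k)"
      then have "b < a" using box_lt[OF shp that] by simp
      moreover have "a < b" using ab(3) \<open>\<not> box lam a (Suc k)\<close> by (subst (asm) hless_unf) simp
      ultimately show False by simp
    qed
    then have "\<tau> a (Suc k) \<le> \<tau> b (Suc k)" using ab(3) that by (subst (asm) hless_unf) auto
    then show ?thesis using ra \<open>box lam a (Suc k)\<close> by simp
  qed
  have h1: "\<bar>int (height lam \<tau>0 a k) - int (height lam \<tau>0 b k)\<bar> = 1" using ab(4) ht by simp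
  have adm: "adm_step lam \<tau>0 \<tau>"
    unfolding adm_step_def
  proof (intro exI conjI impI)
    show "box lam a k" "box lam b k" "a \<noteq> b" using ab(1,2) anb by simp_all
    show "\<tau>0 a k < \<tau>0 b k" using v ab(5) by simp
    show "\<bar>int (height lam \<tau>0 a k) - int (height lam \<tau>0 b k)\<bar> = 1" by (fact h1)
    show "\<tau> = swap_rows \<tau>0 a b k" using bk by simp
    assume "box lam a (Suc k)"
    then show "\<tau>0 a k < \<tau>0 a (Suc k)" "\<tau>0 b k < \<tau>0 a (Suc k)" using v agr ra ab(5) by auto
  next
    assume "box lam b (Suc k)"
    then show "\<tau>0 a k < \<tau>0 b (Suc k)" "\<tau>0 b k < \<tau>0 b (Suc k)" using v agr rb rab ab(5) by auto
  qed
  have z0: "\<forall>i j. \<not> box lam i j \<longrightarrow> \<tau>0 i j = 0"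
  proof (intro allI impI)
    fix i j assume nb: "\<not> box lam i j"
    show "\<tau>0 i j = 0"
    proof (cases "j \<le> k \<and> (i = a \<or> i = b)")
      case True
      then have "box lam i j" using ab(1,2) by (auto simp: box_def)
      then show ?thesis using nb by simp
    next
      case False
      then have "\<tau>0 i j = \<tau> i j" unfolding \<tau>0_def swap_rows_def by auto
      then show ?thesis using Suc.prems(1) nb by simp
    qed
  qed
  have rs0: "row_standard lam \<tau>0"
    unfolding row_standard_def
  proof (intro allI impI)
    fix i j assume bi: "box lam i (Suc j)"
    consider "Suc j \<le> k" | "j = k" | "k < j" by linarith
    then show "\<tau>0 i j < \<tau>0 i (Suc j)"
    proof cases
      case 1
      then have "box lam (pi a b i) (Suc j)" using box_pi[OF ab(1,2), of "Suc j" i] bi by simp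
      then show ?thesis using 1 rs unfolding \<tau>0_def row_standard_def by (simp add: swap_le)
    next
      case 2
      have "\<tau>0 i (Suc j) = \<tau> i (Suc j)" using agr 2 by simp
      moreover have "\<tau>0 i j = \<tau> (pi a b i) j" unfolding \<tau>0_def using 2 by (simp add: swap_le)
      moreover have "\<tau> (pi a b i) j < \<tau> i (Suc j)"
      proof (cases "i = a")
        case True
        then have "\<tau> a k < \<tau> a (Suc k)" using ra bi 2 by simp
        then show ?thesis using True 2 ab(5) by (simp add: pi_def)
      next
        case F1: False
        show ?thesis
        proof (cases "i = b")
          case True
          then show ?thesis using rab bi 2 F1 by (simp add: pi_def)
        next
          case False
          then show ?thesis using rs bi F1 unfolding row_standard_def by (simp add: pi_def)
        qed
      qed
      ultimately show ?thesis by simp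
    next
      case 3
      then show ?thesis using agr rs bi unfolding row_standard_def by simp
    qed
  qed
  have st0: "st lam \<tau>0 = st lam \<tau>" unfolding \<tau>0_def using st_swap[OF shp ab(1,2)] .
  have adj: "\<forall>c. box lam c k \<longrightarrow> c \<noteq> a \<longrightarrow> c \<noteq> b \<longrightarrow> (hless lam \<tau>0 k c a \<longleftrightarrow> hless lam \<tau>0 k c b)"
    using adjacent[OF shp ab(1,2) anb h1] by blast
  let ?P = "{(a,b,k),(b,a,k)}"
  have c1: "card (I lam \<tau> - ?P) = card (I lam \<tau>0 - ?P)"
    using card_I_swap[OF shp ab(1,2) _ adj] v ab(5) bk by simp
  have i0: "I lam \<tau>0 \<inter> ?P = {}" using v ab hl hless_asym by (auto simp: I_def)
  have i1: "I lam \<tau> \<inter> ?P = {(b,a,k)}" using ab hless_asym by (auto simp: I_def)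
  have s1: "card (I lam \<tau>) = card (I lam \<tau> - ?P) + card (I lam \<tau> \<inter> ?P)" by (rule card_split[OF finite_I])
  have s2: "card (I lam \<tau>0) = card (I lam \<tau>0 - ?P) + card (I lam \<tau>0 \<inter> ?P)" by (rule card_split[OF finite_I])
  have "card (I lam \<tau>) = Suc (card (I lam \<tau>0))"
    unfolding s1 s2 c1 i0 i1 by simp
  then have "card (I lam \<tau>0) = n" using Suc.prems(3) by simp
  then have "(adm_step lam ^^ n) (st lam \<tau>0) \<tau>0" using Suc.IH z0 rs0 by blast
  then show ?case using adm st0 by (auto simp: relpowp_Suc_right)
qed


theorem mainTheorem8:
  fixes lam mu :: "nat list" and T \<tau> :: filling
  assumes "is_shape lam" and "is_content lam mu"
    and "T \<in> S_set lam mu"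
    and "is_filling lam mu \<tau>" and "row_standard lam \<tau>"
    and "st lam \<tau> = T"
  shows "(adm_step lam ^^ inv_count lam \<tau>) T \<tau> \<and>
         (\<forall>n. (adm_step lam ^^ n) T \<tau> \<longrightarrow> inv_count lam \<tau> \<le> n)"
proof
  have z: "\<forall>i j. \<not> box lam i j \<longrightarrow> \<tau> i j = 0" using assms(4) by (simp add: is_filling_def)
  show "(adm_step lam ^^ inv_count lam \<tau>) T \<tau>"
    using exist_path[OF assms(1) z assms(5) refl] assms(6) by (simp add: inv_count_I)
  have cw: "col_weak lam T" using assms(3) by (simp add: S_set_def)
  have "\<forall>i i' k. i < i' \<longrightarrow> box lam i' k \<longrightarrow> T i k \<le> T i' k"
    using colsorted[OF assms(1) cw] by simp
  then have e: "I lam T = {}" by (rule I_sorted_empty)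
  show "\<forall>n. (adm_step lam ^^ n) T \<tau> \<longrightarrow> inv_count lam \<tau> \<le> n"
  proof (intro allI impI)
    fix n assume "(adm_step lam ^^ n) T \<tau>"
    then have "card (I lam \<tau>) \<le> card (I lam T) + n" by (rule relpow_bound[OF assms(1)])
    then show "inv_count lam \<tau> \<le> n" using e by (simp add: inv_count_I)
  qed
qed

end
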